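(* Let $q\ge3$ be an integer, let $c_1,\dots,c_q$ be nonnegative integers, and let $s=\sum_{i=1}^q c_i$. Then \[ \sum_{j=1}^q\sum_{k=0}^{c_j-1}\Big(\big((q-2)c_j-(q-1)k+s\big)\prod_{m=1}^{q-3}(s-k+m)\Big)=\prod_{m=2}^{q}(s+q-m). \]
   Context: An empty sum equals $0$ and an empty product equals $1$. *)

theory Defs
  imports Main
begin

end

theory Submission
  imports Defs
begin

definition AA :: "nat \<Rightarrow> int \<Rightarrow> int" where
  "AA n x = (\<Prod>m=1..n. x + int m)"

lemma L0: "AA (Suc n) x = AA n x * (x + int n + 1)"
  by (simp add: AA_def)

lemma L1: "AA (Suc n) (x - 1) = x * AA n x"
proof (induction n)
  case 0 then show ?case by (simp add: AA_def)
next
  case (Suc n)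
  have "AA (Suc (Suc n)) (x - 1) = AA (Suc n) (x - 1) * (x - 1 + int (Suc n) + 1)"
    by (rule L0)
  also have "\<dots> = x * (AA n x * (x + int n + 1))" using Suc by simp
  also have "\<dots> = x * AA (Suc n) x" by (simp add: L0)
  finally show ?case .
qed

lemma L2: "(\<Sum>k<c. (int n + 1) * AA n (s - int k)) = AA (Suc n) s - AA (Suc n) (s - int c)"
proof (induction c)
  case 0 then show ?case by simp
next
  case (Suc c)
  have a: "AA (Suc n) (s - int c) = AA n (s - int c) * (s - int c + int n + 1)" by (rule L0)
  have b: "AA (Suc n) (s - int c - 1) = (s - int c) * AA n (s - int c)" by (rule L1)
  have c: "s - int (Suc c) = s - int c - 1" by simp
  show ?case using Suc a b by (simp only: c sum.lessThan_Suc) (simp add: algebra_simps)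
qed

lemma Lmain: "(\<Sum>k\<in>{0..<c}. (int (n+1) * int c - int (n+2) * int k + s) * AA n (s - int k))
   = int c * AA (Suc n) s"
proof (induction c)
  case 0 then show ?case by simp
next
  case (Suc c)
  have "(\<Sum>k\<in>{0..<Suc c}. (int (n+1) * int (Suc c) - int (n+2) * int k + s) * AA n (s - int k))
     = (\<Sum>k\<in>{0..<c}. (int (n+1) * int c - int (n+2) * int k + s) * AA n (s - int k)
         + (int n + 1) * AA n (s - int k))
       + (s - int c + int n + 1) * AA n (s - int c)"
    by (simp add: algebra_simps)
  also have "\<dots> = int c * AA (Suc n) s + (AA (Suc n) s - AA (Suc n) (s - int c))
       + (s - int c + int n + 1) * AA n (s - int c)"
    using Suc L2[of n s c] by (simp add: sum.distrib atLeast0LessThan)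
  also have "\<dots> = int (Suc c) * AA (Suc n) s" by (simp add: L0 algebra_simps)
  finally show ?case .
qed

lemma Lrhs:
  assumes "q \<ge> 2"
  shows "(\<Prod>m=2..q. s + int q - int m) = AA (q - 1) (s - 1)"
proof -
  have "(\<Prod>m=2..q. s + int q - int m) = (\<Prod>m=2..q. s + int q - int (q + 2 - m))"
    by (rule prod.atLeastAtMost_rev)
  also have "\<dots> = (\<Prod>m=2..q. s + int m - 2)"
    by (rule prod.cong) auto
  also have "\<dots> = (\<Prod>m=1+1..(q-1)+1. s + int m - 2)"
  proof -
    have "{2..q} = {1+1..(q-1)+1}" using assms by auto
    then show ?thesis by (simp only:)
  qed
  also have "\<dots> = (\<Prod>m=1..q-1. s + int (m+1) - 2)"
    by (rule prod.shift_bounds_cl_nat_ivl)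
  also have "\<dots> = AA (q - 1) (s - 1)" unfolding AA_def
    by (rule prod.cong) auto
  finally show ?thesis .
qed

theorem lemmaA2:
  fixes q :: nat and c :: "nat \<Rightarrow> nat" and s :: int
  assumes "q \<ge> 3"
    and "s = (\<Sum>i=1..q. int (c i))"
  shows "(\<Sum>j=1..q. \<Sum>k\<in>{0..<c j}.
            (int (q - 2) * int (c j) - int (q - 1) * int k + s)
              * (\<Prod>m=1..q-3. s - int k + int m))
         = (\<Prod>m=2..q. s + int q - int m)"
proof -
  define n where "n = q - 3"
  have q: "q = n + 3" using assms(1) n_def by simp
  have "(\<Sum>j=1..q. \<Sum>k\<in>{0..<c j}.
            (int (q - 2) * int (c j) - int (q - 1) * int k + s)
              * (\<Prod>m=1..q-3. s - int k + int m))
      = (\<Sum>j=1..q. \<Sum>k\<in>{0..<c j}.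
            (int (n+1) * int (c j) - int (n+2) * int k + s) * AA n (s - int k))"
    unfolding AA_def by (simp add: q)
  also have "\<dots> = (\<Sum>j=1..q. int (c j) * AA (Suc n) s)" by (intro sum.cong refl Lmain)
  also have "\<dots> = s * AA (Suc n) s" using assms(2) by (simp add: sum_distrib_right)
  also have "\<dots> = AA (Suc (Suc n)) (s - 1)" by (simp add: L1)
  also have "\<dots> = (\<Prod>m=2..q. s + int q - int m)" using Lrhs[of q s] q by simp
  finally show ?thesis .
qed

end
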